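(* Let $f_1,\dots,f_n:\mathbb{R}^d\to\mathbb{R}$ be smooth with $e^{-f_i}$ probability densities and $\int e^{-\beta f_i}dx<\infty$ for all $\beta>0$; let $w_1,\dots,w_n>0$, $\sum_iw_i=1$, $w_{\min}=\min_iw_i$, $f=-\ln\sum_iw_ie^{-f_i}$, and for $0<\beta\le1$ let $p_\beta=e^{-\beta f}/\int e^{-\beta f}$. Fix $\beta\in(0,1]$ and suppose $Z_\beta:=\int e^{-\beta f_1}dx=\cdots=\int e^{-\beta f_n}dx$ (e.g. gaussians of equal variance). Suppose each $\tilde p_{\beta,i}=e^{-\beta f_i}/Z_\beta$ satisfies a Poincaré inequality with constant $C_\beta$. Then $p_\beta$ satisfies a Poincaré inequality with constant $\frac{2C_\beta}{w_{\min}}$ on sets of measure $\le\frac{w_{\min}^2}{2}$.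
   Context: For a probability density $p$ on $\mathbb{R}^d$, $\mathcal E_p(g)=\int\|\nabla g\|^2p\,dx$, $\operatorname{Var}_p(g)=\int g^2p-(\int gp)^2$, with $g$ locally Lipschitz and $\int g^2 p<\infty$. $p$ satisfies a Poincaré inequality with constant $C$ if $\mathcal E_p(g)\ge\frac1C\operatorname{Var}_p(g)$ for all such $g$; it satisfies one on sets of measure $\le m$ if this holds for all such $g$ with $p(\operatorname{Supp}(g))\le m$. *)

theory Defs
  imports "HOL-Analysis.Analysis"
begin

coinductive smooth_fun :: "('a::euclidean_space \<Rightarrow> real) \<Rightarrow> bool" where
  "(\<forall>x. f differentiable (at x)) \<Longrightarrow>
   (\<forall>b\<in>Basis. smooth_fun (\<lambda>x. frechet_derivative f (at x) b)) \<Longrightarrow> smooth_fun f"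

definition loc_lipschitz :: "('a::euclidean_space \<Rightarrow> real) \<Rightarrow> bool" where
  "loc_lipschitz g \<longleftrightarrow>
     (\<forall>x. \<exists>e>0. \<exists>L. \<forall>y\<in>ball x e. \<forall>z\<in>ball x e. \<bar>g y - g z\<bar> \<le> L * dist y z)"

text \<open>Gradient: the vector representing the Frechet derivative where it exists
  (for locally Lipschitz g this is almost everywhere, by Rademacher).\<close>
definition grad :: "('a::euclidean_space \<Rightarrow> real) \<Rightarrow> 'a \<Rightarrow> 'a" where
  "grad g x = (SOME v. (g has_derivative (\<lambda>h. v \<bullet> h)) (at x))"

definition dirichlet :: "('a::euclidean_space \<Rightarrow> real) \<Rightarrow> ('a \<Rightarrow> real) \<Rightarrow> ennreal" where
  "dirichlet p g = (\<integral>\<^sup>+ x. ennreal ((norm (grad g x))\<^sup>2 * p x) \<partial>lebesgue)"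

definition variance_p :: "('a::euclidean_space \<Rightarrow> real) \<Rightarrow> ('a \<Rightarrow> real) \<Rightarrow> real" where
  "variance_p p g = (\<integral>x. (g x)\<^sup>2 * p x \<partial>lebesgue) - (\<integral>x. g x * p x \<partial>lebesgue)\<^sup>2"

definition admissible :: "('a::euclidean_space \<Rightarrow> real) \<Rightarrow> ('a \<Rightarrow> real) \<Rightarrow> bool" where
  "admissible p g \<longleftrightarrow> loc_lipschitz g \<and> integrable lebesgue (\<lambda>x. (g x)\<^sup>2 * p x)"

definition poincare :: "('a::euclidean_space \<Rightarrow> real) \<Rightarrow> real \<Rightarrow> bool" where
  "poincare p C \<longleftrightarrow>
     (\<forall>g. admissible p g \<longrightarrow> ennreal (variance_p p g / C) \<le> dirichlet p g)"

definition supp :: "('a::euclidean_space \<Rightarrow> real) \<Rightarrow> 'a set" where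
  "supp g = closure {x. g x \<noteq> 0}"

definition prob_dens :: "('a::euclidean_space \<Rightarrow> real) \<Rightarrow> 'a set \<Rightarrow> ennreal" where
  "prob_dens p A = (\<integral>\<^sup>+ x\<in>A. ennreal (p x) \<partial>lebesgue)"

definition poincare_small_sets :: "('a::euclidean_space \<Rightarrow> real) \<Rightarrow> real \<Rightarrow> real \<Rightarrow> bool" where
  "poincare_small_sets p C m \<longleftrightarrow>
     (\<forall>g. admissible p g \<longrightarrow> prob_dens p (supp g) \<le> ennreal m \<longrightarrow>
          ennreal (variance_p p g / C) \<le> dirichlet p g)"

end

theory Submission imports Defs begin

lemma quad_disc:
  fixes G X H :: real
  assumes "\<And>t. 0 \<le> G - 2*t*X + t^2*H" "H \<ge> 0"
  shows "X^2 \<le> G * H"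
proof (cases "H > 0")
  case True
  have "0 \<le> G - 2*(X/H)*X + (X/H)^2*H" by (rule assms(1))
  also have "\<dots> = G - X^2/H" using True by (simp add: field_simps power2_eq_square)
  finally show ?thesis using True by (simp add: field_simps)
next
  case False
  then have H: "H = 0" using assms(2) by simp
  show ?thesis
  proof (cases "X = 0")
    case True then show ?thesis using H by simp
  next
    case False
    have "0 \<le> G - 2*((G+1)/(2*X))*X + ((G+1)/(2*X))^2*H" by (rule assms(1))
    also have "\<dots> = -1" using False H by (simp add: field_simps)
    finally show ?thesis by simp
  qed
qed

lemma cs_ineq:
  fixes g h r :: "'a \<Rightarrow> real"
  assumes r: "\<And>x. r x \<ge> 0" and ri: "integrable M r"
    and gm: "g \<in> borel_measurable M" and hm: "h \<in> borel_measurable M"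
    and hb: "\<And>x. \<bar>h x\<bar> \<le> 1" and gi: "integrable M (\<lambda>x. (g x)\<^sup>2 * r x)"
  shows "(\<integral>x. g x * h x * r x \<partial>M)\<^sup>2 \<le> (\<integral>x. (g x)\<^sup>2 * r x \<partial>M) * (\<integral>x. (h x)\<^sup>2 * r x \<partial>M)"
proof -
  have rm: "r \<in> borel_measurable M" using ri by auto
  have i1: "integrable M (\<lambda>x. g x * h x * r x)"
  proof (rule Bochner_Integration.integrable_bound[OF Bochner_Integration.integrable_add[OF gi ri]])
    show "(\<lambda>x. g x * h x * r x) \<in> borel_measurable M" using gm hm rm by measurable
    show "AE x in M. norm (g x * h x * r x) \<le> norm ((g x)\<^sup>2 * r x + r x)"
    proof (intro AE_I2)
      fix x
      have "\<bar>g x * h x\<bar> \<le> \<bar>g x\<bar>" using hb[of x] by (simp add: abs_mult mult_left_le)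
      also have "\<dots> \<le> (g x)\<^sup>2 + 1" proof -
        have "0 \<le> (\<bar>g x\<bar> - 1)\<^sup>2" by simp
        then have "0 \<le> \<bar>g x\<bar>\<^sup>2 - 2 * \<bar>g x\<bar> + 1" by (simp add: power2_diff)
        then show ?thesis by simp
      qed
      finally have "\<bar>g x * h x\<bar> * r x \<le> ((g x)\<^sup>2 + 1) * r x" using r[of x] by (rule mult_right_mono)
      then show "norm (g x * h x * r x) \<le> norm ((g x)\<^sup>2 * r x + r x)"
        using r[of x] by (simp add: abs_mult algebra_simps)
    qed
  qed
  have i2: "integrable M (\<lambda>x. (h x)\<^sup>2 * r x)"
  proof (rule Bochner_Integration.integrable_bound[OF ri])
    show "(\<lambda>x. (h x)\<^sup>2 * r x) \<in> borel_measurable M" using hm rm by measurable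
    show "AE x in M. norm ((h x)\<^sup>2 * r x) \<le> norm (r x)"
    proof (intro AE_I2)
      fix x
      have "(h x)\<^sup>2 \<le> 1" using hb[of x] abs_square_le_1 by blast
      then show "norm ((h x)\<^sup>2 * r x) \<le> norm (r x)" using r[of x] by (simp add: abs_mult mult_left_le_one_le)
    qed
  qed
  show ?thesis
  proof (rule quad_disc)
    fix t :: real
    have "0 \<le> (\<integral>x. (g x - t * h x)\<^sup>2 * r x \<partial>M)"
      using r by (intro integral_nonneg_AE) auto
    also have "(\<lambda>x. (g x - t * h x)\<^sup>2 * r x) = (\<lambda>x. ((g x)\<^sup>2 * r x - 2*t*(g x * h x * r x)) + t^2 * ((h x)\<^sup>2 * r x))"
      by (auto simp: power2_eq_square algebra_simps)
    also have "(\<integral>x. ((g x)\<^sup>2 * r x - 2*t*(g x * h x * r x)) + t^2 * ((h x)\<^sup>2 * r x) \<partial>M) =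
       (\<integral>x. (g x)\<^sup>2 * r x \<partial>M) - 2*t*(\<integral>x. g x * h x * r x \<partial>M) + t^2 * (\<integral>x. (h x)\<^sup>2 * r x \<partial>M)"
      using gi i1 i2 by simp
    finally show "0 \<le> (\<integral>x. (g x)\<^sup>2 * r x \<partial>M) - 2*t*(\<integral>x. g x * h x * r x \<partial>M) + t^2 * (\<integral>x. (h x)\<^sup>2 * r x \<partial>M)" .
  next
    show "0 \<le> (\<integral>x. (h x)\<^sup>2 * r x \<partial>M)" using r by (intro integral_nonneg_AE) auto
  qed
qed

lemma lower_pt:
  fixes a w :: "nat \<Rightarrow> real"
  assumes a: "\<And>i. i < n \<Longrightarrow> a i > 0" and w: "\<And>i. i < n \<Longrightarrow> w i > 0"
    and ws: "(\<Sum>i<n. w i) = 1" and b: "0 < \<beta>" "\<beta> \<le> 1"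
  shows "(\<Sum>i<n. w i * a i powr \<beta>) \<le> (\<Sum>i<n. w i * a i) powr \<beta>"
proof -
  define S where "S = (\<Sum>i<n. w i * a i)"
  have n: "n \<noteq> 0" using ws by (cases n) auto
  have S: "S > 0" unfolding S_def using n a w by (intro sum_pos) (auto intro: mult_pos_pos)
  have "\<And>i. i < n \<Longrightarrow> a i powr \<beta> \<le> S powr \<beta> * (\<beta> * (a i / S) + (1 - \<beta>))"
  proof -
    fix i assume i: "i < n"
    have "(a i / S) powr \<beta> * 1 powr (1 - \<beta>) \<le> \<beta> * (a i / S) + (1 - \<beta>) * 1"
      using b a[OF i] S by (intro Youngs_inequality_0) auto
    then have "(a i / S) powr \<beta> \<le> \<beta> * (a i / S) + (1 - \<beta>)" by simp
    moreover have "(a i / S) powr \<beta> = a i powr \<beta> / S powr \<beta>" using a[OF i] S by (simp add: powr_divide)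
    ultimately show "a i powr \<beta> \<le> S powr \<beta> * (\<beta> * (a i / S) + (1 - \<beta>))"
      using S by (simp add: field_simps)
  qed
  then have "(\<Sum>i<n. w i * a i powr \<beta>) \<le> (\<Sum>i<n. w i * (S powr \<beta> * (\<beta> * (a i / S) + (1 - \<beta>))))"
    using w by (intro sum_mono mult_left_mono) (auto intro: less_imp_le)
  also have "\<dots> = (\<Sum>i<n. (S powr \<beta> * \<beta> / S) * (w i * a i) + (S powr \<beta> * (1-\<beta>)) * w i)"
    by (intro sum.cong) (auto simp: field_simps)
  also have "\<dots> = (S powr \<beta> * \<beta> / S) * S + (S powr \<beta> * (1-\<beta>)) * 1"
    unfolding sum.distrib sum_distrib_left[symmetric] S_def[symmetric] ws ..
  also have "\<dots> = S powr \<beta>" using S by (simp add: field_simps)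
  finally show ?thesis unfolding S_def .
qed

lemma upper_pt:
  fixes a w :: "nat \<Rightarrow> real"
  assumes a: "\<And>i. i < n \<Longrightarrow> a i > 0" and w: "\<And>i. i < n \<Longrightarrow> w i > 0"
    and ws: "(\<Sum>i<n. w i) = 1" and b: "0 < \<beta>"
  shows "(\<Sum>i<n. w i * a i) powr \<beta> \<le> (\<Sum>i<n. a i powr \<beta>)"
proof -
  define S where "S = (\<Sum>i<n. w i * a i)"
  have n: "n \<noteq> 0" using ws by (cases n) auto
  have S: "S > 0" unfolding S_def using n a w by (intro sum_pos) (auto intro: mult_pos_pos)
  obtain j where j: "j < n" "S \<le> a j"
  proof (rule ccontr)
    assume "\<not> thesis"
    then have lt: "\<And>j. j < n \<Longrightarrow> a j < S" using that by force
    have "S < (\<Sum>i<n. w i * S)" unfolding S_def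
      using n lt w by (intro sum_strict_mono) (auto simp: S_def)
    also have "\<dots> = S" using ws by (simp flip: sum_distrib_right)
    finally show False by simp
  qed
  have "S powr \<beta> \<le> a j powr \<beta>" using j S b by (intro powr_mono2) auto
  also have "\<dots> \<le> (\<Sum>i<n. a i powr \<beta>)" using j by (intro member_le_sum) auto
  finally show ?thesis unfolding S_def .
qed

lemma aef: "\<not> (AE x in (lebesgue::'a::euclidean_space measure). False)"
  by (metis closed_Collect_const eventually_mono mem_Collect_eq mem_closed_if_AE_lebesgue)

lemma cont_meas: "continuous_on UNIV (h::'a::euclidean_space \<Rightarrow> real) \<Longrightarrow> h \<in> borel_measurable lebesgue"
  by (simp add: borel_measurable_continuous_onI measurable_completion)

lemma loclip_cont:
  assumes "loc_lipschitz (g::'a::euclidean_space \<Rightarrow> real)"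
  shows "continuous_on UNIV g"
proof -
  have "isCont g x" for x
  proof -
    obtain e L where e: "e > 0" and L: "\<forall>y\<in>ball x e. \<forall>z\<in>ball x e. \<bar>g y - g z\<bar> \<le> L * dist y z"
      using assms unfolding loc_lipschitz_def by blast
    have "(max L 0)-lipschitz_on (ball x e) g"
      unfolding lipschitz_on_def
    proof (intro conjI ballI)
      fix y z assume "y \<in> ball x e" "z \<in> ball x e"
      then have "\<bar>g y - g z\<bar> \<le> L * dist y z" using L by blast
      also have "\<dots> \<le> max L 0 * dist y z" by (intro mult_right_mono) auto
      finally show "dist (g y) (g z) \<le> max L 0 * dist y z" by (simp add: dist_real_def)
    qed auto
    then have "continuous_on (ball x e) g" by (rule lipschitz_on_continuous_on)
    then show ?thesis using e by (simp add: continuous_on_eq_continuous_at)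
  qed
  then show ?thesis by (simp add: continuous_at_imp_continuous_on)
qed

lemma smooth_cont:
  assumes "smooth_fun (f::'a::euclidean_space \<Rightarrow> real)"
  shows "continuous_on UNIV f"
proof -
  have "\<forall>x. f differentiable (at x)" using assms by (cases rule: smooth_fun.cases) auto
  then show ?thesis by (simp add: continuous_at_imp_continuous_on differentiable_imp_continuous_within)
qed


lemma nn_superadd:
  "integral\<^sup>N M f + integral\<^sup>N M g \<le> (\<integral>\<^sup>+x. f x + g x \<partial>M)"
proof -
  let ?F = "{s. simple_function M s \<and> s \<le> f}" and ?G = "{t. simple_function M t \<and> t \<le> g}"
  have ne: "?F \<noteq> {}" "?G \<noteq> {}" by (auto intro!: exI[of _ "\<lambda>_. 0"] simp: le_fun_def)
  have "integral\<^sup>N M f + integral\<^sup>N M g = (SUP s\<in>?F. integral\<^sup>S M s) + (SUP t\<in>?G. integral\<^sup>S M t)"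
    unfolding nn_integral_def ..
  also have "\<dots> = (SUP s\<in>?F. integral\<^sup>S M s + (SUP t\<in>?G. integral\<^sup>S M t))"
    using ennreal_SUP_add_left[OF ne(1)] by simp
  also have "\<dots> = (SUP s\<in>?F. SUP t\<in>?G. integral\<^sup>S M s + integral\<^sup>S M t)"
    using ennreal_SUP_add_right[OF ne(2)] by simp
  also have "\<dots> \<le> (\<integral>\<^sup>+x. f x + g x \<partial>M)"
  proof (intro SUP_least)
    fix s t assume s: "s \<in> ?F" and t: "t \<in> ?G"
    have "integral\<^sup>S M s + integral\<^sup>S M t = (\<integral>\<^sup>Sx. s x + t x \<partial>M)"
      using s t by (simp)
    also have "\<dots> = (\<integral>\<^sup>+x. s x + t x \<partial>M)"
      using s t by (simp add: nn_integral_eq_simple_integral)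
    also have "\<dots> \<le> (\<integral>\<^sup>+x. f x + g x \<partial>M)"
      using s t by (intro nn_integral_mono) (auto simp: le_fun_def intro: add_mono)
    finally show "integral\<^sup>S M s + integral\<^sup>S M t \<le> (\<integral>\<^sup>+x. f x + g x \<partial>M)" .
  qed
  finally show ?thesis .
qed

lemma nn_cmult_le:
  "c * integral\<^sup>N M f \<le> (\<integral>\<^sup>+x. c * f x \<partial>M)"
proof -
  let ?F = "{s. simple_function M s \<and> s \<le> f}"
  have "c * integral\<^sup>N M f = (SUP s\<in>?F. c * integral\<^sup>S M s)"
    unfolding nn_integral_def by (simp add: SUP_mult_left_ennreal)
  also have "\<dots> \<le> (\<integral>\<^sup>+x. c * f x \<partial>M)"
  proof (intro SUP_least)
    fix s assume s: "s \<in> ?F"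
    have "c * integral\<^sup>S M s = (\<integral>\<^sup>Sx. c * s x \<partial>M)" using s by simp
    also have "\<dots> = (\<integral>\<^sup>+x. c * s x \<partial>M)"
      using s by (simp add: nn_integral_eq_simple_integral)
    also have "\<dots> \<le> (\<integral>\<^sup>+x. c * f x \<partial>M)"
      using s by (intro nn_integral_mono) (auto simp: le_fun_def intro: mult_left_mono)
    finally show "c * integral\<^sup>S M s \<le> (\<integral>\<^sup>+x. c * f x \<partial>M)" .
  qed
  finally show ?thesis .
qed

lemma nn_sum_le:
  assumes "finite I"
  shows "(\<Sum>i\<in>I. c i * integral\<^sup>N M (f i)) \<le> (\<integral>\<^sup>+x. (\<Sum>i\<in>I. c i * f i x) \<partial>M)"
  using assms
proof (induction I rule: finite_induct)
  case empty then show ?case by simp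
next
  case (insert j I)
  have "(\<Sum>i\<in>insert j I. c i * integral\<^sup>N M (f i)) = c j * integral\<^sup>N M (f j) + (\<Sum>i\<in>I. c i * integral\<^sup>N M (f i))"
    using insert by simp
  also have "\<dots> \<le> (\<integral>\<^sup>+x. c j * f j x \<partial>M) + (\<integral>\<^sup>+x. (\<Sum>i\<in>I. c i * f i x) \<partial>M)"
    using insert.IH nn_cmult_le by (intro add_mono) auto
  also have "\<dots> \<le> (\<integral>\<^sup>+x. c j * f j x + (\<Sum>i\<in>I. c i * f i x) \<partial>M)"
    by (rule nn_superadd)
  also have "\<dots> = (\<integral>\<^sup>+x. (\<Sum>i\<in>insert j I. c i * f i x) \<partial>M)"
    using insert by simp
  finally show ?case .
qed

theorem mainTheorem8:
  fixes n :: nat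
    and fs :: "nat \<Rightarrow> 'a::euclidean_space \<Rightarrow> real"
    and w :: "nat \<Rightarrow> real"
    and \<beta> Z C :: real
  assumes n_pos: "n \<ge> 1"
    and smooth: "\<And>i. i < n \<Longrightarrow> smooth_fun (fs i)"
    and dens_int: "\<And>i. i < n \<Longrightarrow> integrable lebesgue (\<lambda>x. exp (- fs i x))"
    and dens_one: "\<And>i. i < n \<Longrightarrow> (\<integral>x. exp (- fs i x) \<partial>lebesgue) = 1"
    and all_beta: "\<And>i b. i < n \<Longrightarrow> b > 0 \<Longrightarrow> integrable lebesgue (\<lambda>x. exp (- b * fs i x))"
    and w_pos: "\<And>i. i < n \<Longrightarrow> w i > 0"
    and w_sum: "(\<Sum>i<n. w i) = 1"
    and beta: "0 < \<beta>" "\<beta> \<le> 1"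
    and Z_eq: "\<And>i. i < n \<Longrightarrow> (\<integral>x. exp (- \<beta> * fs i x) \<partial>lebesgue) = Z"
    and poinc: "\<And>i. i < n \<Longrightarrow> poincare (\<lambda>x. exp (- \<beta> * fs i x) / Z) C"
  shows "let wmin = Min (w ` {..<n});
             f = (\<lambda>x. - ln (\<Sum>i<n. w i * exp (- fs i x)));
             p = (\<lambda>x. exp (- \<beta> * f x) / (\<integral>y. exp (- \<beta> * f y) \<partial>lebesgue))
         in poincare_small_sets p (2 * C / wmin) (wmin\<^sup>2 / 2)"
proof -
  define wmin where "wmin = Min (w ` {..<n})"
  define F where "F = (\<lambda>x. - ln (\<Sum>i<n. w i * exp (- fs i x)))"
  define P where "P = (\<lambda>x. exp (- \<beta> * F x))"
  define Zp where "Zp = (\<integral>y. P y \<partial>lebesgue)"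
  define p where "p = (\<lambda>x. P x / Zp)"
  define q where "q = (\<lambda>i x. exp (- \<beta> * fs i x))"
  define pt where "pt = (\<lambda>i x. q i x / Z)"
  define S where "S = (\<lambda>x. \<Sum>i<n. w i * exp (- fs i x))"
  have n0: "n \<noteq> 0" using n_pos by simp
  have wmin_in: "wmin \<in> w ` {..<n}" unfolding wmin_def using n0 by (intro Min_in) auto
  have wmin_pos: "wmin > 0" using wmin_in w_pos by auto
  have wmin_le: "\<And>i. i < n \<Longrightarrow> wmin \<le> w i" unfolding wmin_def by (intro Min_le) auto
  have wmin_le1: "wmin \<le> 1"
  proof -
    obtain j where j: "j < n" "wmin = w j" using wmin_in by auto
    have "w j \<le> (\<Sum>i<n. w i)" using j w_pos by (intro member_le_sum) (auto intro: less_imp_le)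
    then show ?thesis using j w_sum by simp
  qed
  have cont_fs: "\<And>i. i < n \<Longrightarrow> continuous_on UNIV (fs i)" using smooth smooth_cont by blast
  have S_pos: "\<And>x. S x > 0" unfolding S_def using n0 w_pos
    by (intro sum_pos) (auto intro: mult_pos_pos)
  have P_eq: "\<And>x. P x = S x powr \<beta>"
    using S_pos unfolding P_def F_def S_def powr_def by (auto simp: less_le)
  have q_eq: "\<And>i x. q i x = exp (- fs i x) powr \<beta>"
    unfolding q_def powr_def by (simp add: mult.commute)
  have q_pos: "\<And>i x. q i x > 0" unfolding q_def by simp
  have L: "\<And>x. (\<Sum>i<n. w i * q i x) \<le> P x"
    unfolding P_eq q_eq S_def using w_pos beta w_sum by (intro lower_pt) auto
  have U: "\<And>x. P x \<le> (1/wmin) * (\<Sum>i<n. w i * q i x)"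
  proof -
    fix x
    have "P x \<le> (\<Sum>i<n. q i x)"
      unfolding P_eq q_eq S_def using w_pos beta w_sum by (intro upper_pt) auto
    also have "\<dots> \<le> (\<Sum>i<n. (1/wmin) * (w i * q i x))"
    proof (intro sum_mono)
      fix i assume "i \<in> {..<n}"
      then have "1 \<le> w i / wmin" using wmin_le wmin_pos by (simp add: field_simps)
      then have "1 * q i x \<le> (w i / wmin) * q i x" using q_pos[of i x] by (intro mult_right_mono) (auto intro: less_imp_le)
      then show "q i x \<le> (1/wmin) * (w i * q i x)" by simp
    qed
    finally show "P x \<le> (1/wmin) * (\<Sum>i<n. w i * q i x)" by (simp add: sum_distrib_left)
  qed
  have P_pos: "\<And>x. P x > 0" unfolding P_def by simp
  have q_cont: "\<And>i. i < n \<Longrightarrow> continuous_on UNIV (q i)"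
    unfolding q_def using cont_fs by (auto intro!: continuous_intros)
  have q_meas: "\<And>i. i < n \<Longrightarrow> q i \<in> borel_measurable lebesgue" using q_cont cont_meas by blast
  have q_int: "\<And>i. i < n \<Longrightarrow> integrable lebesgue (q i)"
    unfolding q_def using all_beta beta by blast
  have q_Z: "\<And>i. i < n \<Longrightarrow> (\<integral>x. q i x \<partial>lebesgue) = Z" unfolding q_def using Z_eq by blast
  have Z_pos: "Z > 0"
  proof -
    have "0 \<le> Z" using q_Z[of 0] n0 q_pos by (metis integral_nonneg_AE AE_I2 less_imp_le not_gr0)
    moreover have "Z \<noteq> 0"
    proof
      assume "Z = 0"
      then have "AE x in lebesgue. q 0 x = 0"
        using integral_nonneg_eq_0_iff_AE[OF q_int[of 0]] q_Z[of 0] n0 q_pos by (auto intro: less_imp_le)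
      then have "AE x in (lebesgue :: 'a measure). False" by (rule AE_mp) (rule AE_I2, metis q_pos less_irrefl)
      then show False using aef by blast
    qed
    ultimately show ?thesis by simp
  qed
  have S_cont: "continuous_on UNIV S" unfolding S_def using cont_fs by (auto intro!: continuous_intros)
  have P_cont: "continuous_on UNIV P"
  proof -
    have "P = (\<lambda>x. exp (\<beta> * ln (S x)))" unfolding P_def F_def S_def by simp
    moreover have "continuous_on UNIV (\<lambda>x. exp (\<beta> * ln (S x)))" using S_cont S_pos by (auto intro!: continuous_intros simp: less_le)
    ultimately show ?thesis by simp
  qed
  have P_meas: "P \<in> borel_measurable lebesgue" using P_cont cont_meas by blast
  have sq_int: "integrable lebesgue (\<lambda>x. \<Sum>i<n. w i * q i x)"
    using q_int by (auto intro!: Bochner_Integration.integrable_sum)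
  have sq_Z: "(\<integral>x. (\<Sum>i<n. w i * q i x) \<partial>lebesgue) = Z"
  proof -
    have "(\<integral>x. (\<Sum>i<n. w i * q i x) \<partial>lebesgue) = (\<Sum>i<n. w i * Z)"
      using q_int q_Z by (subst Bochner_Integration.integral_sum) auto
    also have "\<dots> = Z" using w_sum by (simp flip: sum_distrib_right)
    finally show ?thesis .
  qed
  have P_int: "integrable lebesgue P"
  proof (rule Bochner_Integration.integrable_bound[OF integrable_mult_right[OF sq_int, of "1/wmin"] P_meas])
    show "AE x in lebesgue. norm (P x) \<le> norm (1/wmin * (\<Sum>i<n. w i * q i x))"
      using U P_pos by (intro AE_I2) (smt (verit) real_norm_def)
  qed
  have Zp_ge: "Z \<le> Zp"
    unfolding Zp_def using sq_Z L by (metis integral_mono[OF sq_int P_int])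
  have Zp_le: "Zp \<le> Z / wmin"
  proof -
    have "Zp \<le> (\<integral>x. 1/wmin * (\<Sum>i<n. w i * q i x) \<partial>lebesgue)"
      unfolding Zp_def using U by (intro integral_mono[OF P_int]) (auto intro: sq_int)
    also have "\<dots> = Z / wmin" using sq_Z by simp
    finally show ?thesis .
  qed
  have Zp_pos: "Zp > 0" using Zp_ge Z_pos by simp
  have p_int: "integrable lebesgue p" unfolding p_def using P_int by simp
  have p_one: "(\<integral>x. p x \<partial>lebesgue) = 1" unfolding p_def Zp_def using Zp_pos Zp_def by simp
  have p_nn: "\<And>x. p x \<ge> 0" unfolding p_def using P_pos Zp_pos by (auto intro: less_imp_le)
  have p_meas: "p \<in> borel_measurable lebesgue" using p_int by auto
  have wq_le_Pp: "\<And>i x. i < n \<Longrightarrow> w i * q i x \<le> Zp * p x"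
  proof -
    fix i x assume i: "i < n"
    have "w i * q i x \<le> (\<Sum>j<n. w j * q j x)"
      using i w_pos q_pos by (intro member_le_sum) (auto intro: less_imp_le)
    also have "\<dots> \<le> P x" by (rule L)
    finally show "w i * q i x \<le> Zp * p x" unfolding p_def using Zp_pos by simp
  qed
  have "poincare_small_sets p (2 * C / wmin) (wmin\<^sup>2 / 2)"
    unfolding poincare_small_sets_def
  proof (intro allI impI)
    fix g assume adm: "admissible p g" and small: "prob_dens p (supp g) \<le> ennreal (wmin\<^sup>2 / 2)"
    have g_cont: "continuous_on UNIV g" using adm loclip_cont unfolding admissible_def by blast
    have g_meas: "g \<in> borel_measurable lebesgue" using g_cont cont_meas by blast
    have g2p_int: "integrable lebesgue (\<lambda>x. (g x)\<^sup>2 * p x)" using adm unfolding admissible_def by blast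
    have var_nn: "variance_p p g \<ge> 0"
    proof -
      have "(\<integral>x. g x * 1 * p x \<partial>lebesgue)\<^sup>2 \<le> (\<integral>x. (g x)\<^sup>2 * p x \<partial>lebesgue) * (\<integral>x. 1\<^sup>2 * p x \<partial>lebesgue)"
        using p_nn p_int g_meas g2p_int by (intro cs_ineq) auto
      then show ?thesis unfolding variance_p_def using p_one by simp
    qed
    show "ennreal (variance_p p g / (2 * C / wmin)) \<le> dirichlet p g"
    proof (cases "C > 0")
      case False
      then have "variance_p p g / (2 * C / wmin) \<le> 0"
        proof -
          have "2*C/wmin \<le> 0" using False wmin_pos by (simp add: divide_nonpos_pos)
          then show ?thesis using var_nn divide_nonneg_nonpos by blast
        qed
      then show ?thesis by (simp add: ennreal_neg)
    next
      case Cpos: True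
      define A where "A = supp g"
      have A_meas: "A \<in> sets lebesgue"
        unfolding A_def supp_def by (metis closed_closure borel_closed sets_lborel sets_completionI_sets)
      have g_A: "\<And>x. g x * indicator A x = g x"
      proof -
        fix x show "g x * indicator A x = g x"
        proof (cases "g x = 0")
          case False then have "x \<in> {x. g x \<noteq> 0}" by simp
          then have "x \<in> A" unfolding A_def supp_def using closure_subset by (rule subsetD[rotated])
          then show ?thesis by simp
        qed simp
      qed
      have ind_meas: "indicator A \<in> borel_measurable lebesgue" using A_meas by simp
      have pA_int: "integrable lebesgue (\<lambda>x. p x * indicator A x)"
      proof (rule Bochner_Integration.integrable_bound[OF p_int])
        show "(\<lambda>x. p x * indicator A x) \<in> borel_measurable lebesgue" using p_meas ind_meas by measurable
        show "AE x in lebesgue. norm (p x * indicator A x) \<le> norm (p x)"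
          by (intro AE_I2) (auto split: split_indicator)
      qed
      define IA where "IA = (\<integral>x. p x * indicator A x \<partial>lebesgue)"
      have IA_nn: "IA \<ge> 0" unfolding IA_def using p_nn by (intro integral_nonneg_AE) (auto split: split_indicator)
      have IA_le: "IA \<le> wmin\<^sup>2 / 2"
      proof -
        have eq: "(\<lambda>x. ennreal (p x) * indicator A x) = (\<lambda>x. ennreal (p x * indicator A x))"
          by (auto split: split_indicator)
        have "prob_dens p A = ennreal IA"
          unfolding prob_dens_def IA_def eq
          using p_nn by (intro nn_integral_eq_integral[OF pA_int]) (auto split: split_indicator)
        then show ?thesis using small unfolding A_def[symmetric] by simp
      qed
      have g2q_int: "integrable lebesgue (\<lambda>x. (g x)\<^sup>2 * q i x)" if i: "i < n" for i
      proof (rule Bochner_Integration.integrable_bound[OF integrable_mult_right[OF g2p_int, of "Zp / w i"]])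
        show "(\<lambda>x. (g x)\<^sup>2 * q i x) \<in> borel_measurable lebesgue" using g_meas q_meas[OF i] by measurable
        show "AE x in lebesgue. norm ((g x)\<^sup>2 * q i x) \<le> norm (Zp / w i * ((g x)\<^sup>2 * p x))"
        proof (intro AE_I2)
          fix x
          have "q i x \<le> Zp / w i * p x" using wq_le_Pp[OF i, of x] w_pos[OF i] by (simp add: field_simps)
          then have "(g x)\<^sup>2 * q i x \<le> (g x)\<^sup>2 * (Zp / w i * p x)" by (intro mult_left_mono) auto
          then show "norm ((g x)\<^sup>2 * q i x) \<le> norm (Zp / w i * ((g x)\<^sup>2 * p x))"
            using q_pos[of i x] p_nn[of x] Zp_pos w_pos[OF i] by (simp add: abs_mult mult_ac)
        qed
      qed
      have pt_nn: "\<And>i x. pt i x \<ge> 0" unfolding pt_def using q_pos Z_pos by (auto intro: less_imp_le)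
      have pt_int: "integrable lebesgue (pt i)" if i: "i < n" for i
        unfolding pt_def using q_int[OF i] by simp
      have g2pt_int: "integrable lebesgue (\<lambda>x. (g x)\<^sup>2 * pt i x)" if i: "i < n" for i
      proof -
        have "integrable lebesgue (\<lambda>x. (g x)\<^sup>2 * q i x / Z)" using g2q_int[OF i] by simp
        then show ?thesis unfolding pt_def by (simp add: times_divide_eq_right)
      qed
      define M where "M = (\<lambda>i. \<integral>x. (g x)\<^sup>2 * pt i x \<partial>lebesgue)"
      have M_nn: "\<And>i. M i \<ge> 0" unfolding M_def using pt_nn by (intro integral_nonneg_AE) auto
      have PA: "(\<integral>x. (indicator A x)\<^sup>2 * pt i x \<partial>lebesgue) \<le> 1/2" if i: "i < n" for i
      proof -
        have qA_int: "integrable lebesgue (\<lambda>x. indicator A x * q i x)"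
        proof (rule Bochner_Integration.integrable_bound[OF q_int[OF i]])
          show "(\<lambda>x. indicator A x * q i x) \<in> borel_measurable lebesgue" using q_meas[OF i] ind_meas by measurable
          show "AE x in lebesgue. norm (indicator A x * q i x) \<le> norm (q i x)"
            by (intro AE_I2) (auto split: split_indicator)
        qed
        have "(\<integral>x. (indicator A x)\<^sup>2 * pt i x \<partial>lebesgue) = (\<integral>x. indicator A x * q i x \<partial>lebesgue) / Z"
        proof -
          have "(\<lambda>x. (indicator A x)\<^sup>2 * pt i x) = (\<lambda>x. indicator A x * q i x / Z)"
            unfolding pt_def by (auto split: split_indicator)
          then show ?thesis by simp
        qed
        also have "(\<integral>x. indicator A x * q i x \<partial>lebesgue) \<le> (\<integral>x. Zp / w i * (p x * indicator A x) \<partial>lebesgue)"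
        proof (intro integral_mono[OF qA_int])
          show "integrable lebesgue (\<lambda>x. Zp / w i * (p x * indicator A x))" using pA_int by simp
          fix x
          have "q i x \<le> Zp / w i * p x" using wq_le_Pp[OF i, of x] w_pos[OF i] by (simp add: field_simps)
          then show "indicator A x * q i x \<le> Zp / w i * (p x * indicator A x)"
            by (auto split: split_indicator)
        qed
        also have "\<dots> = Zp / w i * IA" unfolding IA_def by simp
        also have "\<dots> \<le> (Z / wmin) / w i * (wmin\<^sup>2 / 2)"
          using Zp_le IA_le IA_nn w_pos[OF i] Zp_pos Z_pos wmin_pos
          by (intro mult_mono divide_right_mono) auto
        also have "\<dots> = Z * (wmin / w i) / 2" using wmin_pos by (simp add: power2_eq_square field_simps)
        also have "\<dots> \<le> Z * 1 / 2"
          using wmin_le[OF i] w_pos[OF i] Z_pos by (intro divide_right_mono mult_left_mono) auto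
        finally show ?thesis using Z_pos by (simp add: divide_right_mono)
      qed
      have Mi_bd: "ennreal (M i / (2 * C)) \<le> dirichlet (pt i) g" if i: "i < n" for i
      proof -
        have poi: "poincare (pt i) C" using poinc[OF i] unfolding pt_def q_def .
        have admi: "admissible (pt i) g" using adm g2pt_int[OF i] unfolding admissible_def by blast
        have cs: "(\<integral>x. g x * indicator A x * pt i x \<partial>lebesgue)\<^sup>2
              \<le> (\<integral>x. (g x)\<^sup>2 * pt i x \<partial>lebesgue) * (\<integral>x. (indicator A x)\<^sup>2 * pt i x \<partial>lebesgue)"
          using pt_nn pt_int[OF i] g_meas ind_meas g2pt_int[OF i]
          by (intro cs_ineq) (auto split: split_indicator)
        have eqm: "(\<integral>x. g x * pt i x \<partial>lebesgue) = (\<integral>x. g x * indicator A x * pt i x \<partial>lebesgue)"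
          unfolding g_A ..
        have "(\<integral>x. g x * pt i x \<partial>lebesgue)\<^sup>2 \<le> M i * (\<integral>x. (indicator A x)\<^sup>2 * pt i x \<partial>lebesgue)"
          using cs unfolding eqm M_def .
        also have "\<dots> \<le> M i * (1/2)" using PA[OF i] M_nn[of i] by (rule mult_left_mono)
        finally have "(\<integral>x. g x * pt i x \<partial>lebesgue)\<^sup>2 \<le> M i * (1/2)" .
        then have "M i / 2 \<le> variance_p (pt i) g" unfolding variance_p_def M_def by simp
        then have "M i / (2 * C) \<le> variance_p (pt i) g / C"
          using Cpos by (simp add: divide_right_mono flip: divide_divide_eq_left)
        then have "ennreal (M i / (2 * C)) \<le> ennreal (variance_p (pt i) g / C)" by (rule ennreal_leI)
        also have "\<dots> \<le> dirichlet (pt i) g" using poi admi unfolding poincare_def by blast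
        finally show ?thesis .
      qed
      define Gp where "Gp = (\<integral>x. (g x)\<^sup>2 * p x \<partial>lebesgue)"
      have var_le: "variance_p p g \<le> Gp" unfolding variance_p_def Gp_def by simp
      have Gp_le: "Gp \<le> Z / (Zp * wmin) * (\<Sum>i<n. w i * M i)"
      proof -
        have gsq_int: "integrable lebesgue (\<lambda>x. 1/wmin * (\<Sum>i<n. w i * ((g x)\<^sup>2 * q i x)))"
          using g2q_int by (auto intro!: Bochner_Integration.integrable_sum)
        have "Gp * Zp = (\<integral>x. (g x)\<^sup>2 * P x \<partial>lebesgue)"
          unfolding Gp_def p_def using Zp_pos by (simp add: times_divide_eq_right)
        also have "(\<integral>x. (g x)\<^sup>2 * P x \<partial>lebesgue) \<le> (\<integral>x. 1/wmin * (\<Sum>i<n. w i * ((g x)\<^sup>2 * q i x)) \<partial>lebesgue)"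
        proof (rule integral_mono[OF _ gsq_int])
          have "(\<lambda>x. (g x)\<^sup>2 * P x) = (\<lambda>x. Zp * ((g x)\<^sup>2 * p x))"
            unfolding p_def using Zp_pos by (auto simp: field_simps)
          then show "integrable lebesgue (\<lambda>x. (g x)\<^sup>2 * P x)" using g2p_int by simp
          fix x
          have "(g x)\<^sup>2 * P x \<le> (g x)\<^sup>2 * (1/wmin * (\<Sum>i<n. w i * q i x))" using U[of x] by (intro mult_left_mono) auto
          then show "(g x)\<^sup>2 * P x \<le> 1/wmin * (\<Sum>i<n. w i * ((g x)\<^sup>2 * q i x))"
            by (simp add: sum_distrib_left mult_ac)
        qed
        also have "(\<integral>x. 1/wmin * (\<Sum>i<n. w i * ((g x)\<^sup>2 * q i x)) \<partial>lebesgue)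
            = 1/wmin * (\<Sum>i<n. w i * (\<integral>x. (g x)\<^sup>2 * q i x \<partial>lebesgue))"
          using g2q_int by (subst integral_mult_right_zero, subst Bochner_Integration.integral_sum) auto
        also have "\<dots> = 1/wmin * (\<Sum>i<n. w i * (Z * M i))"
        proof -
          have "\<And>i. i < n \<Longrightarrow> (\<integral>x. (g x)\<^sup>2 * q i x \<partial>lebesgue) = Z * M i"
            unfolding M_def pt_def using Z_pos by (simp add: times_divide_eq_right)
          then show ?thesis by simp
        qed
        also have "\<dots> = Z / wmin * (\<Sum>i<n. w i * M i)"
          by (simp add: sum_distrib_left mult_ac)
        finally have GZ: "Gp * Zp \<le> Z / wmin * (\<Sum>i<n. w i * M i)" .
        have eq: "Z / (Zp * wmin) * (\<Sum>i<n. w i * M i) = (Z / wmin * (\<Sum>i<n. w i * M i)) / Zp"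
          by (simp add: field_simps)
        have "Gp \<le> (Z / wmin * (\<Sum>i<n. w i * M i)) / Zp"
          using GZ Zp_pos by (subst pos_le_divide_eq) auto
        then show ?thesis unfolding eq .
      qed
      define c where "c = (\<lambda>i. w i * Z / Zp)"
      have c_nn: "\<And>i. i < n \<Longrightarrow> c i \<ge> 0" unfolding c_def using w_pos Z_pos Zp_pos by (auto intro: less_imp_le)
      have "variance_p p g / (2 * C / wmin) \<le> Gp * wmin / (2 * C)"
        using var_le wmin_pos Cpos by (simp add: divide_right_mono)
      also have "\<dots> \<le> (Z / (Zp * wmin) * (\<Sum>i<n. w i * M i)) * wmin / (2 * C)"
        using Gp_le wmin_pos Cpos by (intro divide_right_mono mult_right_mono) auto
      also have "\<dots> = (\<Sum>i<n. c i * (M i / (2 * C)))"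
        unfolding c_def using wmin_pos Zp_pos Cpos by (simp add: sum_distrib_left sum_divide_distrib field_simps)
      finally have v1: "ennreal (variance_p p g / (2 * C / wmin)) \<le> ennreal (\<Sum>i<n. c i * (M i / (2 * C)))"
        by (rule ennreal_leI)
      also have "\<dots> = (\<Sum>i<n. ennreal (c i) * ennreal (M i / (2 * C)))"
      proof -
        have "ennreal (\<Sum>i<n. c i * (M i / (2 * C))) = (\<Sum>i<n. ennreal (c i * (M i / (2 * C))))"
          using c_nn M_nn Cpos by (intro sum_ennreal[symmetric]) auto
        also have "\<dots> = (\<Sum>i<n. ennreal (c i) * ennreal (M i / (2 * C)))"
          using c_nn by (intro sum.cong refl ennreal_mult') auto
        finally show ?thesis .
      qed
      also have "\<dots> \<le> (\<Sum>i<n. ennreal (c i) * dirichlet (pt i) g)"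
        using Mi_bd by (intro sum_mono mult_left_mono) auto
      also have "\<dots> \<le> (\<integral>\<^sup>+x. (\<Sum>i<n. ennreal (c i) * ennreal ((norm (grad g x))\<^sup>2 * pt i x)) \<partial>lebesgue)"
        unfolding dirichlet_def by (rule nn_sum_le) simp
      also have "\<dots> \<le> dirichlet p g"
        unfolding dirichlet_def
      proof (rule nn_integral_mono)
        fix x
        have "(\<Sum>i<n. ennreal (c i) * ennreal ((norm (grad g x))\<^sup>2 * pt i x))
            = ennreal (\<Sum>i<n. c i * ((norm (grad g x))\<^sup>2 * pt i x))"
        proof -
          have "(\<Sum>i<n. ennreal (c i) * ennreal ((norm (grad g x))\<^sup>2 * pt i x)) = (\<Sum>i<n. ennreal (c i * ((norm (grad g x))\<^sup>2 * pt i x)))"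
            using c_nn by (intro sum.cong refl ennreal_mult'[symmetric]) auto
          also have "\<dots> = ennreal (\<Sum>i<n. c i * ((norm (grad g x))\<^sup>2 * pt i x))"
            using c_nn pt_nn by (intro sum_ennreal) auto
          finally show ?thesis .
        qed
        also have "(\<Sum>i<n. c i * ((norm (grad g x))\<^sup>2 * pt i x)) = (norm (grad g x))\<^sup>2 / Zp * (\<Sum>i<n. w i * q i x)"
          unfolding c_def pt_def sum_distrib_left using Z_pos by (intro sum.cong refl) (simp add: field_simps)
        also have "\<dots> \<le> (norm (grad g x))\<^sup>2 / Zp * P x"
          using L[of x] Zp_pos by (intro mult_left_mono) auto
        also have "\<dots> = (norm (grad g x))\<^sup>2 * p x" unfolding p_def by simp
        finally show "(\<Sum>i<n. ennreal (c i) * ennreal ((norm (grad g x))\<^sup>2 * pt i x)) \<le> ennreal ((norm (grad g x))\<^sup>2 * p x)"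
          by (simp add: ennreal_leI)
      qed
      finally show ?thesis .
    qed
  qed
  moreover have "p = (\<lambda>x. exp (- \<beta> * F x) / (\<integral>y. exp (- \<beta> * F y) \<partial>lebesgue))"
    unfolding p_def P_def Zp_def ..
  ultimately show ?thesis unfolding Let_def wmin_def[symmetric] F_def[symmetric] by simp
qed

end
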